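(* Let $X$ be a Hausdorff $k_\omega$-space, let $Y$ be a Hausdorff topological space, and let $f:X\to Y$ be an injective continuous map. Then $f$ is regular.
   Context: A topological space $X$ is a $k_\omega$-space if there is a countable cover $\mathcal K$ of $X$ by compact subsets that determines the topology of $X$: a set $U\subset X$ is open in $X$ if and only if $U\cap K$ is open in $K$ for every $K\in\mathcal K$. A continuous map $h:X\to Y$ between topological spaces is called regular if for each point $x\in X$ and each neighborhood $U$ of $x$ in $X$ there is a closed subset $F\subset Y$ such that $h^{-1}(F)$ is a closed neighborhood of $x$ with $h^{-1}(F)\subset U$. *)

theory Defs
  imports "HOL-Analysis.Analysis"
begin

definition k_omega_space :: "'a topology \<Rightarrow> bool" where
  "k_omega_space X \<longleftrightarrow>
     (\<exists>\<K>. countable \<K> \<and> (\<forall>K\<in>\<K>. compactin X K) \<and> \<Union>\<K> = topspace X \<and>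
        (\<forall>U. U \<subseteq> topspace X \<longrightarrow>
              (openin X U \<longleftrightarrow> (\<forall>K\<in>\<K>. openin (subtopology X K) (U \<inter> K)))))"

definition nbhd_in :: "'a topology \<Rightarrow> 'a \<Rightarrow> 'a set \<Rightarrow> bool" where
  "nbhd_in X x N \<longleftrightarrow> N \<subseteq> topspace X \<and> (\<exists>V. openin X V \<and> x \<in> V \<and> V \<subseteq> N)"

definition regular_map :: "'a topology \<Rightarrow> 'b topology \<Rightarrow> ('a \<Rightarrow> 'b) \<Rightarrow> bool" where
  "regular_map X Y h \<longleftrightarrow> continuous_map X Y h \<and>
     (\<forall>x\<in>topspace X. \<forall>U. nbhd_in X x U \<longrightarrow>
        (\<exists>F. closedin Y F \<and>
             closedin X {z \<in> topspace X. h z \<in> F} \<and>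
             nbhd_in X x {z \<in> topspace X. h z \<in> F} \<and>
             {z \<in> topspace X. h z \<in> F} \<subseteq> U))"

end

theory Submission
  imports Defs
begin

lemma sepY:
  assumes "Hausdorff_space Y" "compactin Y C1" "compactin Y C2" "disjnt C1 C2"
  shows "\<exists>G. openin Y G \<and> C1 \<subseteq> G \<and> disjnt (Y closure_of G) C2"
proof -
  obtain U V where UV: "openin Y U" "openin Y V" "C1 \<subseteq> U" "C2 \<subseteq> V" "disjnt U V"
    using Hausdorff_space_compact_sets[THEN iffD1, OF assms(1), rule_format, OF conjI[OF assms(2) conjI[OF assms(3,4)]]]
    by blast
  have "Y closure_of U \<subseteq> topspace Y - V"
  proof (rule closure_of_minimal)
    show "U \<subseteq> topspace Y - V" using UV(1,5) openin_subset unfolding disjnt_def by blast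
    show "closedin Y (topspace Y - V)" using UV(2) by blast
  qed
  then show ?thesis using UV by (rule_tac x=U in exI) (auto simp: disjnt_def)
qed

lemma stepX:
  assumes H: "Hausdorff_space X" and K: "compactin X K" and A: "compactin X A" "A \<subseteq> K"
    and C: "closedin X C" "disjnt A C"
  shows "\<exists>A'. compactin X A' \<and> A' \<subseteq> K \<and> disjnt A' C \<and> A \<subseteq> A' \<and>
              (\<forall>y\<in>A. \<exists>Ob. openin X Ob \<and> y \<in> Ob \<and> Ob \<inter> K \<subseteq> A')"
proof -
  let ?S = "subtopology X K"
  have HS: "Hausdorff_space ?S" using H Hausdorff_space_subtopology by blast
  have cS: "compact_space ?S" using K compact_space_subtopology by blast
  have nS: "normal_space ?S" using HS cS compact_Hausdorff_or_regular_imp_normal_space by blast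
  have "compactin ?S A" unfolding compactin_subtopology using A by blast
  then have cA: "closedin ?S A" by (rule compactin_imp_closedin[OF HS])
  have cC: "closedin ?S (C \<inter> K)"
    unfolding closedin_subtopology using C(1) by blast
  have "disjnt A (C \<inter> K)" using C by (auto simp: disjnt_def)
  then obtain G where G: "openin ?S G" "A \<subseteq> G" "disjnt (C \<inter> K) (?S closure_of G)"
    using nS[unfolded normal_space, rule_format, OF conjI[OF cA conjI[OF cC]]] by blast
  define A' where "A' = ?S closure_of G"
  have "compactin ?S A'" unfolding A'_def by (rule closedin_compact_space[OF cS closedin_closure_of])
  hence cA': "compactin X A'" "A' \<subseteq> K" unfolding compactin_subtopology by auto
  have "G \<subseteq> topspace ?S" using G(1) openin_subset by blast
  then have GA': "G \<subseteq> A'" unfolding A'_def by (rule closure_of_subset)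
  obtain Ob where O: "openin X Ob" "G = Ob \<inter> K" using G(1) unfolding openin_subtopology by blast
  show ?thesis
  proof (intro exI conjI)
    show "disjnt A' C" using G(3) cA'(2) unfolding A'_def disjnt_def by blast
    show "\<forall>y\<in>A. \<exists>Ob. openin X Ob \<and> y \<in> Ob \<and> Ob \<inter> K \<subseteq> A'"
      using O GA' G(2) by blast
    show "compactin X A'" by (rule cA'(1))
    show "A' \<subseteq> K" by (rule cA'(2))
    show "A \<subseteq> A'" using GA' G(2) by blast
  qed
qed

theorem proposition1:
  fixes X :: "'a topology" and Y :: "'b topology" and f :: "'a \<Rightarrow> 'b"
  assumes "Hausdorff_space X" and "k_omega_space X"
    and "Hausdorff_space Y"
    and "continuous_map X Y f" and "inj_on f (topspace X)"
  shows "regular_map X Y f"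
  unfolding regular_map_def
proof (intro conjI ballI allI impI)
  show "continuous_map X Y f" by fact
  fix x U
  assume x: "x \<in> topspace X" and "nbhd_in X x U"
  then obtain V0 where V0: "openin X V0" "x \<in> V0" "V0 \<subseteq> U" "U \<subseteq> topspace X"
    unfolding nbhd_in_def by blast
  define L where "L = topspace X - V0"
  have cL: "closedin X L" unfolding L_def using V0 by blast
  obtain \<K> where KK: "countable \<K>" "\<forall>K\<in>\<K>. compactin X K" "\<Union>\<K> = topspace X"
    "\<And>U. U \<subseteq> topspace X \<Longrightarrow> (openin X U \<longleftrightarrow> (\<forall>K\<in>\<K>. openin (subtopology X K) (U \<inter> K)))"
    using assms(2) unfolding k_omega_space_def by blast
  have Kne: "\<K> \<noteq> {}"
  proof
    assume "\<K> = {}"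
    then have "topspace X = {}" using KK(3) by simp
    then show False using x by simp
  qed
  define g where "g = from_nat_into \<K>"
  have rg: "range g = \<K>" unfolding g_def using Kne KK(1) by simp
  define K where "K n = insert x (\<Union>(g ` {..n}))" for n
  have cK: "compactin X (K n)" for n
  proof -
    have gK: "g i \<in> \<K>" for i
    proof -
      have "g i \<in> range g" by (rule rangeI)
      then show ?thesis unfolding rg .
    qed
    have cU: "compactin X (\<Union>(g ` {..n}))"
    proof (rule compactin_Union)
      show "finite (g ` {..n})" by simp
      fix T assume "T \<in> g ` {..n}"
      then obtain i where "T = g i" by blast
      then show "compactin X T" using gK[of i] KK(2) by simp
    qed
    have "compactin X ({x} \<union> \<Union>(g ` {..n}))"
      by (rule compactin_Un[OF _ cU]) (simp add: x)
    then show ?thesis unfolding K_def by simp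
  qed
  have monoK: "m \<le> n \<Longrightarrow> K m \<subseteq> K n" for m n unfolding K_def by auto
  have coverK: "\<exists>n. z \<in> K n" if zt: "z \<in> topspace X" for z
  proof -
    have "z \<in> \<Union>\<K>" using KK(3) zt by simp
    then obtain Q where "Q \<in> \<K>" "z \<in> Q" by blast
    then obtain i where "Q = g i" using rg by auto
    then show ?thesis using \<open>z \<in> Q\<close> unfolding K_def by blast
  qed
  have openK: "openin X V" if Vt: "V \<subseteq> topspace X" and Vn: "\<And>n. openin (subtopology X (K n)) (V \<inter> K n)" for V
  proof -
    have "openin (subtopology X Q) (V \<inter> Q)" if "Q \<in> \<K>" for Q
    proof -
      obtain i where Qi: "Q = g i" using rg \<open>Q \<in> \<K>\<close> by auto
      obtain T where T: "openin X T" "V \<inter> K i = T \<inter> K i"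
        using Vn[of i] unfolding openin_subtopology by blast
      have "g i \<subseteq> K i" unfolding K_def by auto
      then have "V \<inter> Q = T \<inter> Q" using T(2) Qi by blast
      then show ?thesis unfolding openin_subtopology using T(1) by blast
    qed
    then show ?thesis using KK(4)[OF Vt] by blast
  qed
  define Inv where "Inv n p \<longleftrightarrow> compactin X (fst p) \<and> fst p \<subseteq> K n \<and> x \<in> fst p \<and> disjnt (fst p) L
      \<and> openin Y (snd p) \<and> disjnt (f ` fst p) (Y closure_of (snd p))" for n p
  define Q where "Q n p q \<longleftrightarrow> Inv (Suc n) q \<and> fst p \<subseteq> fst q \<and> snd p \<subseteq> snd q
      \<and> f ` (L \<inter> K (Suc n)) \<subseteq> snd q
      \<and> (\<forall>y\<in>fst p. \<exists>Ob. openin X Ob \<and> y \<in> Ob \<and> Ob \<inter> K (Suc n) \<subseteq> fst q)" for n p q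
  have step: "\<exists>q. Q n p q" if "Inv n p" for n p
  proof -
    obtain A W where p: "p = (A, W)" by fastforce
    have I: "compactin X A" "A \<subseteq> K n" "x \<in> A" "disjnt A L" "openin Y W"
      "disjnt (f ` A) (Y closure_of W)" using that unfolding Inv_def p by auto
    define C where "C = L \<union> {z \<in> topspace X. f z \<in> Y closure_of W}"
    have cC: "closedin X C" unfolding C_def
      by (rule closedin_Un[OF cL closedin_continuous_map_preimage[OF assms(4) closedin_closure_of]])
    have dAC: "disjnt A C" using I unfolding C_def disjnt_def by auto
    have AK: "A \<subseteq> K (Suc n)" using I(2) monoK[of n "Suc n"] by simp
    obtain A' where A': "compactin X A'" "A' \<subseteq> K (Suc n)" "disjnt A' C" "A \<subseteq> A'"
      "\<forall>y\<in>A. \<exists>Ob. openin X Ob \<and> y \<in> Ob \<and> Ob \<inter> K (Suc n) \<subseteq> A'"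
      using stepX[OF assms(1) cK I(1) AK cC dAC] by blast
    have c1: "compactin Y (f ` (L \<inter> K (Suc n)))"
      by (rule image_compactin[OF closed_Int_compactin[OF cL cK] assms(4)])
    have c2: "compactin Y (f ` A')" using image_compactin[OF A'(1) assms(4)] .
    have A'top: "A' \<subseteq> topspace X" using A'(1) compactin_subset_topspace by blast
    have d12: "disjnt (f ` (L \<inter> K (Suc n))) (f ` A')"
      unfolding disjnt_iff
    proof (intro allI notI)
      fix y assume yy: "y \<in> f ` (L \<inter> K (Suc n)) \<and> y \<in> f ` A'"
      have y1: "y \<in> f ` (L \<inter> K (Suc n))" and y2: "y \<in> f ` A'" using yy by blast+
      obtain z1 where z1: "z1 \<in> L" "y = f z1" using y1 by blast
      obtain z2 where z2: "z2 \<in> A'" "y = f z2" using y2 by blast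
      have "z1 \<in> topspace X" using z1(1) unfolding L_def by blast
      moreover have "z2 \<in> topspace X" using z2(1) A'top by blast
      ultimately have "z1 = z2" using assms(5) z1(2) z2(2) unfolding inj_on_def by metis
      then have "z2 \<in> A' \<inter> C" using z1(1) z2(1) unfolding C_def by blast
      then show False using A'(3) unfolding disjnt_def by blast
    qed
    obtain G where G: "openin Y G" "f ` (L \<inter> K (Suc n)) \<subseteq> G" "disjnt (Y closure_of G) (f ` A')"
      using sepY[OF assms(3) c1 c2 d12] by blast
    have "disjnt (f ` A') (Y closure_of W)"
      using A'(3) A'top unfolding C_def disjnt_def by auto
    then have "disjnt (f ` A') (Y closure_of (W \<union> G))"
      using G(3) by (auto simp: closure_of_Un disjnt_def)
    moreover have "disjnt A' L" using A'(3) unfolding C_def disjnt_def by blast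
    moreover have "openin Y (W \<union> G)" using I(5) G(1) by (rule openin_Un)
    moreover have "f ` (L \<inter> K (Suc n)) \<subseteq> W \<union> G" using G(2) by blast
    moreover have "x \<in> A'" using I(3) A'(4) by blast
    ultimately have "Q n p (A', W \<union> G)"
      unfolding Q_def Inv_def p fst_conv snd_conv using A'(1,2,4,5) by blast
    then show ?thesis by blast
  qed
  define S where "S = rec_nat ({x}, {}) (\<lambda>n p. SOME q. Q n p q)"
  have S0: "S 0 = ({x}, {})" unfolding S_def by simp
  have SS: "S (Suc n) = (SOME q. Q n (S n) q)" for n unfolding S_def by simp
  have invS: "Inv n (S n) \<and> Q n (S n) (S (Suc n))" for n
  proof (induction n)
    case 0
    have "Inv 0 (S 0)" unfolding S0 Inv_def fst_conv snd_conv
      using x V0 by (simp add: L_def K_def disjnt_def)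
    moreover have "Q 0 (S 0) (S (Suc 0))" unfolding SS by (rule someI_ex[OF step[OF \<open>Inv 0 (S 0)\<close>]])
    ultimately show ?case by blast
  next
    case (Suc n)
    then have "Inv (Suc n) (S (Suc n))" unfolding Q_def by blast
    moreover have "Q (Suc n) (S (Suc n)) (S (Suc (Suc n)))"
      unfolding SS[of "Suc n"] by (rule someI_ex[OF step[OF \<open>Inv (Suc n) (S (Suc n))\<close>]])
    ultimately show ?case by blast
  qed
  define A where "A n = fst (S n)" for n
  define W where "W n = snd (S n)" for n
  have monoA: "m \<le> n \<Longrightarrow> A m \<subseteq> A n" for m n
    using lift_Suc_mono_le[of A] invS unfolding Q_def A_def by blast
  have monoW: "m \<le> n \<Longrightarrow> W m \<subseteq> W n" for m n
    using lift_Suc_mono_le[of W] invS unfolding Q_def W_def by blast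
  have InvA: "compactin X (A n)" "A n \<subseteq> K n" "x \<in> A n" "openin Y (W n)"
    "disjnt (f ` A n) (Y closure_of (W n))" for n
    using invS[of n] unfolding Inv_def A_def W_def by auto
  have LW: "f ` (L \<inter> K (Suc n)) \<subseteq> W (Suc n)" for n
    using invS[of n] unfolding Q_def W_def by auto
  have intA: "\<forall>y\<in>A n. \<exists>Ob. openin X Ob \<and> y \<in> Ob \<and> Ob \<inter> K (Suc n) \<subseteq> A (Suc n)" for n
    using invS[of n] unfolding Q_def A_def by auto
  define V where "V = (\<Union>n. A n)"
  have Vtop: "V \<subseteq> topspace X" unfolding V_def
  proof (rule UN_least)
    fix n show "A n \<subseteq> topspace X" using InvA(1)[of n] by (rule compactin_subset_topspace)
  qed
  have oV: "openin X V"
  proof (rule openK[OF Vtop])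
    fix m
    show "openin (subtopology X (K m)) (V \<inter> K m)"
    proof (subst openin_subopen, intro ballI)
      fix y assume "y \<in> V \<inter> K m"
      then obtain n where yn: "y \<in> A n" "y \<in> K m" unfolding V_def by auto
      define k where "k = max n m"
      have "y \<in> A k" using yn monoA[of n k] unfolding k_def by auto
      then obtain Ob where Ob: "openin X Ob" "y \<in> Ob" "Ob \<inter> K (Suc k) \<subseteq> A (Suc k)"
        using intA by blast
      have "K m \<subseteq> K (Suc k)" using monoK unfolding k_def by auto
      then have "Ob \<inter> K m \<subseteq> V \<inter> K m" using Ob(3) unfolding V_def by blast
      moreover have "openin (subtopology X (K m)) (Ob \<inter> K m)"
        unfolding openin_subtopology using Ob(1) by blast
      ultimately show "\<exists>T. openin (subtopology X (K m)) T \<and> y \<in> T \<and> T \<subseteq> V \<inter> K m"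
        using Ob(2) yn(2) by blast
    qed
  qed
  define WW where "WW = (\<Union>n. W n)"
  define F where "F = topspace Y - WW"
  have "openin Y WW" unfolding WW_def by (rule openin_Union) (use InvA(4) in blast)
  then have cF: "closedin Y F" unfolding F_def by (rule closedin_diff[OF closedin_topspace])
  have pre_sub: "{z \<in> topspace X. f z \<in> F} \<subseteq> U"
  proof
    fix z assume z: "z \<in> {z \<in> topspace X. f z \<in> F}"
    show "z \<in> U"
    proof (rule ccontr)
      assume "z \<notin> U"
      then have "z \<in> L" using z V0 unfolding L_def by auto
      obtain n where "z \<in> K n" using coverK z by auto
      then have "z \<in> K (Suc n)" using monoK[of n "Suc n"] by auto
      then have "f z \<in> W (Suc n)" using LW \<open>z \<in> L\<close> by blast
      then show False using z unfolding F_def WW_def by auto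
    qed
  qed
  have V_sub: "V \<subseteq> {z \<in> topspace X. f z \<in> F}"
  proof
    fix z assume "z \<in> V"
    then obtain n where zn: "z \<in> A n" unfolding V_def by auto
    have zt: "z \<in> topspace X" using \<open>z \<in> V\<close> Vtop by auto
    have "f z \<notin> W j" for j
    proof
      assume fj: "f z \<in> W j"
      define k where "k = max n j"
      have "z \<in> A k" using zn monoA[of n k] unfolding k_def by auto
      moreover have "f z \<in> W k" using fj monoW[of j k] unfolding k_def by auto
      moreover have "W k \<subseteq> Y closure_of W k"
        by (rule closure_of_subset[OF openin_subset[OF InvA(4)]])
      ultimately show False using InvA(5)[of k] unfolding disjnt_def by blast
    qed
    moreover have "f z \<in> topspace Y" using continuous_map_image_subset_topspace[OF assms(4)] zt by blast
    ultimately show "z \<in> {z \<in> topspace X. f z \<in> F}" using zt unfolding F_def WW_def by auto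
  qed
  have xV: "x \<in> V" unfolding V_def using InvA(3) by blast
  show "\<exists>F. closedin Y F \<and> closedin X {z \<in> topspace X. f z \<in> F} \<and>
          nbhd_in X x {z \<in> topspace X. f z \<in> F} \<and> {z \<in> topspace X. f z \<in> F} \<subseteq> U"
  proof (intro exI conjI)
    show "closedin X {z \<in> topspace X. f z \<in> F}"
      using closedin_continuous_map_preimage[OF assms(4) cF] .
    show "nbhd_in X x {z \<in> topspace X. f z \<in> F}"
      unfolding nbhd_in_def using oV xV V_sub by blast
  qed (use cF pre_sub in auto)
qed

end
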